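(* Let $G$ be the central product of normal subgroups $H,K$ ($G=HK$, $[H,K]=1$), $A=H\cap K$, $Z=H'\cap K'$, $D$ a divisible abelian group with trivial action. Put $\bar G=G/Z$, $\bar H=H/Z$, $\bar K=K/Z$, $\bar A=A/Z$ (so $\bar G$ is the central product of $\bar H,\bar K$ with $\bar H\cap\bar K=\bar A$). Let $\xi\in\operatorname{H}^2(\bar G,D)$ with $\theta'(\xi)=(\xi_1,\xi_2,t)$, where $\theta'=(\operatorname{res}^{\bar G}_{\bar H},\operatorname{res}^{\bar G}_{\bar K},\nu)$ as in the context, and suppose that $\operatorname{res}^{\bar H}_{\bar A}(\xi_1)=0$ or $\operatorname{res}^{\bar K}_{\bar A}(\xi_2)=0$. Then the following are equivalent: (i) $\xi$ lies in the image of the inflation map $\operatorname{H}^2(\bar G/\bar A,D)\to\operatorname{H}^2(\bar G,D)$; (ii) $\mu^*(t)=0$; (iii) $\psi_{\bar H}(\xi_1)=0$ and $\psi_{\bar K}(\xi_2)=0$.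
   Context: $X\otimes Y$ denotes the abelian tensor product $X/X'\otimes_{\mathbb{Z}}Y/Y'$; $D$ is written additively and classes are represented by 2-cocycles $f$. For $\xi\in\operatorname{H}^2(\bar G,D)$ represented by $f$, $\nu(\xi)\in\operatorname{Hom}(\bar H\otimes\bar K,D)$ is $\nu(\xi)(h\bar H'\otimes k\bar K')=f(h,k)-f(k,h)$. For a group $X$ with central subgroup $\bar A$, $\psi_X:\operatorname{H}^2(X,D)\to\operatorname{Hom}(X\otimes\bar A,D)$ is defined by $\psi_X(\zeta)(xX'\otimes a)=f(x,a)-f(a,x)$ for $x\in X$, $a\in\bar A$, where $f$ represents $\zeta$. The map $\mu^*:\operatorname{Hom}(\bar H\otimes\bar K,D)\to\operatorname{Hom}(\bar H\otimes\bar A,D)\oplus\operatorname{Hom}(\bar K\otimes\bar A,D)$ is $\mu^*(t)=(t_1,t_2)$ with $t_1(h\bar H'\otimes a)=t(h\bar H'\otimes a\bar K')$ and $t_2(k\bar K'\otimes a)=t(a\bar H'\otimes k\bar K')$ for $h\in\bar H$, $k\in\bar K$, $a\in\bar A$. *)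

theory Defs
  imports "HOL-Algebra.Algebra"
begin

definition divisible_ab :: "'d::ab_group_add itself \<Rightarrow> bool" where
  "divisible_ab _ \<longleftrightarrow> (\<forall>(x::'d) (n::nat). n > 0 \<longrightarrow> (\<exists>y::'d. (\<Sum>i<n. y) = x))"

text \<open>Inhomogeneous 2-cocycles and 2-coboundaries of a group X with coefficients in D
  (trivial action); only values on the carrier matter.\<close>
definition cocycle2 :: "('g,'m) monoid_scheme \<Rightarrow> ('g \<Rightarrow> 'g \<Rightarrow> 'd::ab_group_add) \<Rightarrow> bool" where
  "cocycle2 Q f \<longleftrightarrow> (\<forall>x\<in>carrier Q. \<forall>y\<in>carrier Q. \<forall>z\<in>carrier Q.
      f y z - f (x \<otimes>\<^bsub>Q\<^esub> y) z + f x (y \<otimes>\<^bsub>Q\<^esub> z) - f x y = 0)"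

definition coboundary2 :: "('g,'m) monoid_scheme \<Rightarrow> ('g \<Rightarrow> 'g \<Rightarrow> 'd::ab_group_add) \<Rightarrow> bool" where
  "coboundary2 Q f \<longleftrightarrow> (\<exists>c::'g \<Rightarrow> 'd. \<forall>x\<in>carrier Q. \<forall>y\<in>carrier Q.
      f x y = c y - c (x \<otimes>\<^bsub>Q\<^esub> y) + c x)"

definition cohomologous2 :: "('g,'m) monoid_scheme \<Rightarrow> ('g \<Rightarrow> 'g \<Rightarrow> 'd::ab_group_add)
    \<Rightarrow> ('g \<Rightarrow> 'g \<Rightarrow> 'd) \<Rightarrow> bool" where
  "cohomologous2 Q f g \<longleftrightarrow> coboundary2 Q (\<lambda>x y. f x y - g x y)"

definition res_zero :: "('g,'m) monoid_scheme \<Rightarrow> 'g set \<Rightarrow> ('g \<Rightarrow> 'g \<Rightarrow> 'd::ab_group_add) \<Rightarrow> bool" where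
  "res_zero Q S f \<longleftrightarrow> coboundary2 (Q\<lparr>carrier := S\<rparr>) f"

definition in_image_inflation :: "('g,'m) monoid_scheme \<Rightarrow> 'g set \<Rightarrow> ('g \<Rightarrow> 'g \<Rightarrow> 'd::ab_group_add) \<Rightarrow> bool" where
  "in_image_inflation Q N f \<longleftrightarrow> (\<exists>g :: 'g set \<Rightarrow> 'g set \<Rightarrow> 'd. cocycle2 (Q Mod N) g \<and>
      cohomologous2 Q f (\<lambda>x y. g (N #>\<^bsub>Q\<^esub> x) (N #>\<^bsub>Q\<^esub> y)))"

text \<open>Elements of Hom(X/X' \<otimes> Y/Y', D) are represented by their values on pure tensors
  (x X' \<otimes> y Y'), i.e. as functions of two arguments; such a homomorphism is zero iff it
  vanishes on all pure tensors.\<close>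
definition hom_tensor_zero :: "'x set \<Rightarrow> 'y set \<Rightarrow> ('x \<Rightarrow> 'y \<Rightarrow> 'd::zero) \<Rightarrow> bool" where
  "hom_tensor_zero Q W t \<longleftrightarrow> (\<forall>x\<in>Q. \<forall>y\<in>W. t x y = 0)"

definition nu_map :: "('g \<Rightarrow> 'g \<Rightarrow> 'd::ab_group_add) \<Rightarrow> 'g \<Rightarrow> 'g \<Rightarrow> 'd" where
  "nu_map f = (\<lambda>h k. f h k - f k h)"

definition psi_map :: "('g \<Rightarrow> 'g \<Rightarrow> 'd::ab_group_add) \<Rightarrow> 'g \<Rightarrow> 'g \<Rightarrow> 'd" where
  "psi_map f = (\<lambda>x a. f x a - f a x)"

definition mu_star :: "('g \<Rightarrow> 'g \<Rightarrow> 'd) \<Rightarrow> ('g \<Rightarrow> 'g \<Rightarrow> 'd) \<times> ('g \<Rightarrow> 'g \<Rightarrow> 'd)" where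
  "mu_star t = ((\<lambda>h a. t h a), (\<lambda>k a. t a k))"

definition Zc :: "('a,'m) monoid_scheme \<Rightarrow> 'a set \<Rightarrow> 'a set \<Rightarrow> 'a set" where
  "Zc G H K = derived G H \<inter> derived G K"

definition qbar :: "('a,'m) monoid_scheme \<Rightarrow> 'a set \<Rightarrow> 'a set \<Rightarrow> 'a set set" where
  "qbar G N T = (\<lambda>s. N #>\<^bsub>G\<^esub> s) ` T"

end

theory Submission imports Defs begin

context group begin

lemma cocycle_psi_hom:
  assumes f: "cocycle2 G f" and a: "a \<in> carrier G" "\<forall>x\<in>carrier G. a \<otimes> x = x \<otimes> a"
    and x: "x \<in> carrier G" and y: "y \<in> carrier G"
  shows "f (x \<otimes> y) a - f a (x \<otimes> y) = (f x a - f a x) + (f y a - f a y)"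
proof -
  have 1: "f y a - f (x \<otimes> y) a + f x (y \<otimes> a) - f x y = 0"
    using f a x y unfolding cocycle2_def by blast
  have 2: "f a y - f (x \<otimes> a) y + f x (a \<otimes> y) - f x a = 0"
    using f a x y unfolding cocycle2_def by blast
  have 3: "f x y - f (a \<otimes> x) y + f a (x \<otimes> y) - f a x = 0"
    using f a x y unfolding cocycle2_def by blast
  have "y \<otimes> a = a \<otimes> y" "x \<otimes> a = a \<otimes> x" using a x y by auto
  then have "f (x \<otimes> y) a - f a (x \<otimes> y) - ((f x a - f a x) + (f y a - f a y))
     = - (f y a - f (x \<otimes> y) a + f x (y \<otimes> a) - f x y)
       + (f a y - f (x \<otimes> a) y + f x (a \<otimes> y) - f x a)
       - (f x y - f (a \<otimes> x) y + f a (x \<otimes> y) - f a x)"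
    by (simp add: algebra_simps)
  also have "\<dots> = 0" using 1 2 3 by simp
  finally show ?thesis by simp
qed

lemma infl_sym:
  assumes N: "N \<lhd> G" and f: "cocycle2 G f" and inf: "in_image_inflation G N f"
    and x: "x \<in> carrier G" and a: "a \<in> N" and c: "x \<otimes> a = a \<otimes> x"
  shows "f x a = f a x"
proof -
  interpret N: normal N G by (rule N)
  obtain g where g: "cocycle2 (G Mod N) g"
    and h: "cohomologous2 G f (\<lambda>x y. g (N #> x) (N #> y))"
    using inf unfolding in_image_inflation_def by blast
  obtain c where c: "\<forall>x\<in>carrier G. \<forall>y\<in>carrier G.
      f x y - g (N #> x) (N #> y) = c y - c (x \<otimes> y) + c x"
    using h unfolding cohomologous2_def coboundary2_def by blast
  have ac: "a \<in> carrier G" using a N.subset by blast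
  have Na: "N #> a = N" using N.rcos_const[OF is_group a] .
  have N1: "N = N #> \<one>" using N.subset by simp
  have Nc: "N \<in> carrier (G Mod N)" using N1 rcosetsI[OF N.subset one_closed]
    by (simp add: FactGroup_def)
  have Xc: "N #> x \<in> carrier (G Mod N)" using rcosetsI[OF N.subset x]
    by (simp add: FactGroup_def)
  have NN: "N <#> N = N" using N.rcos_sum[OF one_closed one_closed] N1 by simp
  have NX: "N <#> (N #> x) = N #> x" using N.rcos_sum[OF one_closed x] N1 x
    by (metis l_one)
  have XN: "(N #> x) <#> N = N #> x" using N.rcos_sum[OF x one_closed] N1 x
    by (metis r_one)
  have m: "\<And>U V. monoid.mult (G Mod N) U V = U <#> V" by (simp add: FactGroup_def)
  have gg: "\<And>U V W. U \<in> carrier (G Mod N) \<Longrightarrow> V \<in> carrier (G Mod N) \<Longrightarrow> W \<in> carrier (G Mod N) \<Longrightarrow>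
      g V W - g (U <#> V) W + g U (V <#> W) - g U V = 0"
    using g unfolding cocycle2_def m by blast
  have g1: "g (N #> x) N = g N N"
    using gg[OF Xc Nc Nc] by (simp add: NN XN)
  have g2: "g N (N #> x) = g N N"
    using gg[OF Nc Nc Xc] by (simp add: NN NX)
  have e1: "f x a = g (N #> x) N + (c a - c (x \<otimes> a) + c x)"
    using c x ac Na by (metis diff_add_cancel add.commute)
  have e2: "f a x = g N (N #> x) + (c x - c (a \<otimes> x) + c a)"
    using c x ac Na by (metis diff_add_cancel add.commute)
  show ?thesis using e1 e2 g1 g2 \<open>x \<otimes> a = a \<otimes> x\<close> apply (simp add: algebra_simps) by (metis add_right_cancel)
qed


lemma cob_cocycle:
  "\<lbrakk>x \<in> carrier G; y \<in> carrier G; z \<in> carrier G\<rbrakk> \<Longrightarrow>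
   (c z - c (y \<otimes> z) + c y) - (c z - c (x \<otimes> y \<otimes> z) + c (x \<otimes> y))
   + (c (y \<otimes> z) - c (x \<otimes> (y \<otimes> z)) + c x) - (c y - c (x \<otimes> y) + c x) = (0::'d::ab_group_add)"
  by (simp add: m_assoc algebra_simps)

lemma central_normal:
  assumes N: "subgroup N G" and cen: "\<forall>a\<in>N. \<forall>x\<in>carrier G. a \<otimes> x = x \<otimes> a"
  shows "N \<lhd> G"
proof -
  have "x \<otimes> h \<otimes> inv x \<in> N" if "x \<in> carrier G" "h \<in> N" for x h
  proof -
    have hc: "h \<in> carrier G" using N that subgroup.subset by blast
    have "x \<otimes> h \<otimes> inv x = h \<otimes> x \<otimes> inv x" using cen that by auto
    also have "\<dots> = h" using hc that by (simp add: m_assoc)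
    finally show ?thesis using that by simp
  qed
  then show ?thesis using N normal_inv_iff by blast
qed

lemma infl_of_sym:
  assumes N: "subgroup N G" and cen: "\<forall>a\<in>N. \<forall>x\<in>carrier G. a \<otimes> x = x \<otimes> a"
    and f: "cocycle2 G (f :: 'a \<Rightarrow> 'a \<Rightarrow> 'd::ab_group_add)"
    and r: "coboundary2 (G\<lparr>carrier := N\<rparr>) f"
    and sym: "\<forall>x\<in>carrier G. \<forall>a\<in>N. f x a = f a x"
  shows "in_image_inflation G N f"
proof -
  interpret N: normal N G using central_normal[OF N cen] .
  have Nsub: "N \<subseteq> carrier G" by (rule N.subset)
  have cen': "\<And>a x. a \<in> N \<Longrightarrow> x \<in> carrier G \<Longrightarrow> a \<otimes> x = x \<otimes> a" using cen by blast
  obtain c0 where c0: "\<forall>x\<in>N. \<forall>y\<in>N. f x y = c0 y - c0 (x \<otimes> y) + c0 x"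
    using r unfolding coboundary2_def by auto
  define c1 where "c1 = (\<lambda>x. if x \<in> N then c0 x else 0)"
  define f1 where "f1 = (\<lambda>x y. f x y - (c1 y - c1 (x \<otimes> y) + c1 x))"
  have fc: "\<And>x y z. x \<in> carrier G \<Longrightarrow> y \<in> carrier G \<Longrightarrow> z \<in> carrier G \<Longrightarrow>
      f y z - f (x \<otimes> y) z + f x (y \<otimes> z) - f x y = 0"
    using f unfolding cocycle2_def by blast
  have f1c: "f1 y z - f1 (x \<otimes> y) z + f1 x (y \<otimes> z) - f1 x y = 0"
    if "x \<in> carrier G" "y \<in> carrier G" "z \<in> carrier G" for x y z
  proof -
    have "f1 y z - f1 (x \<otimes> y) z + f1 x (y \<otimes> z) - f1 x y =
      (f y z - f (x \<otimes> y) z + f x (y \<otimes> z) - f x y) -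
      ((c1 z - c1 (y \<otimes> z) + c1 y) - (c1 z - c1 (x \<otimes> y \<otimes> z) + c1 (x \<otimes> y))
   + (c1 (y \<otimes> z) - c1 (x \<otimes> (y \<otimes> z)) + c1 x) - (c1 y - c1 (x \<otimes> y) + c1 x))"
      unfolding f1_def by (simp add: algebra_simps)
    then show ?thesis using fc[OF that] cob_cocycle[OF that, of c1] by simp
  qed
  have f1N: "f1 a b = 0" if "a \<in> N" "b \<in> N" for a b
    using that c0 N.m_closed unfolding f1_def c1_def by simp
  have f1sym: "f1 x a = f1 a x" if "x \<in> carrier G" "a \<in> N" for x a
  proof -
    have "a \<otimes> x = x \<otimes> a" using cen' that by blast
    then show ?thesis using that sym unfolding f1_def c1_def by (simp add: algebra_simps)
  qed
  define s where "s = (\<lambda>U::'a set. SOME t. t \<in> U)"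
  have sin: "s (N #> x) \<in> N #> x" if "x \<in> carrier G" for x
    unfolding s_def by (rule someI, rule rcos_self[OF that N])
  have sc: "s (N #> x) \<in> carrier G" if "x \<in> carrier G" for x
    using sin[OF that] N.elemrcos_carrier[OF is_group that] by blast
  define rr where "rr = (\<lambda>x. x \<otimes> inv (s (N #> x)))"
  have rrN: "rr x \<in> N" if "x \<in> carrier G" for x
  proof -
    have "s (N #> x) \<otimes> inv x \<in> N" using N.rcos_module_imp[OF is_group that sin[OF that]] .
    then have "inv (s (N #> x) \<otimes> inv x) \<in> N" by (rule N.m_inv_closed)
    then show ?thesis unfolding rr_def using that sc[OF that] by (simp add: inv_mult_group)
  qed
  have rrc: "rr x \<in> carrier G" if "x \<in> carrier G" for x using rrN[OF that] Nsub by blast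
  have decomp: "s (N #> x) \<otimes> rr x = x" if "x \<in> carrier G" for x
  proof -
    have "s (N #> x) \<otimes> rr x = rr x \<otimes> s (N #> x)" using cen'[OF rrN[OF that] sc[OF that]] by simp
    also have "\<dots> = x" unfolding rr_def using that sc[OF that] by (simp add: m_assoc)
    finally show ?thesis .
  qed
  have Nshift: "N #> (z \<otimes> a) = N #> z" if "z \<in> carrier G" "a \<in> N" for z a
  proof -
    have ac: "a \<in> carrier G" using that Nsub by blast
    have "N #> (z \<otimes> a) = N #> (a \<otimes> z)" using cen'[OF that(2,1)] by simp
    also have "\<dots> = (N #> a) #> z" using coset_mult_assoc[OF Nsub ac that(1)] by simp
    also have "\<dots> = N #> z" using N.rcos_const[OF is_group that(2)] by simp
    finally show ?thesis .
  qed
  define c where "c = (\<lambda>x. - f1 (s (N #> x)) (rr x))"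
  have K1: "c (z \<otimes> a) = c z - f1 z a" if "z \<in> carrier G" "a \<in> N" for z a
  proof -
    have ac: "a \<in> carrier G" using that Nsub by blast
    let ?t = "s (N #> z)"
    have t: "?t \<in> carrier G" using sc[OF that(1)] .
    have rza: "rr (z \<otimes> a) = rr z \<otimes> a"
    proof -
      have "rr (z \<otimes> a) = z \<otimes> (a \<otimes> inv ?t)" unfolding rr_def using Nshift[OF that] that ac t
        by (simp add: m_assoc)
      also have "\<dots> = z \<otimes> (inv ?t \<otimes> a)" using cen'[OF that(2) inv_closed[OF t]] by simp
      also have "\<dots> = rr z \<otimes> a" unfolding rr_def using that ac t by (simp add: m_assoc)
      finally show ?thesis .
    qed
    have cc: "f1 (rr z) a - f1 (?t \<otimes> rr z) a + f1 ?t (rr z \<otimes> a) - f1 ?t (rr z) = 0"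
      using f1c[OF t rrc[OF that(1)] ac] .
    have "f1 (rr z) a = 0" using f1N rrN[OF that(1)] that(2) by blast
    then show ?thesis using cc decomp[OF that(1)] rza Nshift[OF that] unfolding c_def
      by (simp add: algebra_simps)
  qed
  define F where "F = (\<lambda>x y. f1 x y - (c y - c (x \<otimes> y) + c x))"
  have Fc: "F y z - F (x \<otimes> y) z + F x (y \<otimes> z) - F x y = 0"
    if "x \<in> carrier G" "y \<in> carrier G" "z \<in> carrier G" for x y z
  proof -
    have "F y z - F (x \<otimes> y) z + F x (y \<otimes> z) - F x y =
      (f1 y z - f1 (x \<otimes> y) z + f1 x (y \<otimes> z) - f1 x y) -
      ((c z - c (y \<otimes> z) + c y) - (c z - c (x \<otimes> y \<otimes> z) + c (x \<otimes> y))
   + (c (y \<otimes> z) - c (x \<otimes> (y \<otimes> z)) + c x) - (c y - c (x \<otimes> y) + c x))"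
      unfolding F_def by (simp add: algebra_simps)
    then show ?thesis using f1c[OF that] cob_cocycle[OF that, of c] by simp
  qed
  have K2: "F (x \<otimes> a) y = F x y" if "x \<in> carrier G" "y \<in> carrier G" "a \<in> N" for x y a
  proof -
    have ac: "a \<in> carrier G" using that Nsub by blast
    have 1: "f1 y a - f1 (x \<otimes> y) a + f1 x (y \<otimes> a) - f1 x y = 0" using f1c[OF that(1,2) ac] .
    have 2: "f1 a y - f1 (x \<otimes> a) y + f1 x (a \<otimes> y) - f1 x a = 0" using f1c[OF that(1) ac that(2)] .
    have ya: "y \<otimes> a = a \<otimes> y" using cen'[OF that(3,2)] by simp
    have sy: "f1 a y = f1 y a" using f1sym that by simp
    have e: "f1 (x \<otimes> a) y - f1 x y = f1 (x \<otimes> y) a - f1 x a"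
    proof -
      have "f1 (x \<otimes> a) y - f1 x y - (f1 (x \<otimes> y) a - f1 x a) =
          (f1 y a - f1 (x \<otimes> y) a + f1 x (y \<otimes> a) - f1 x y)
          - (f1 a y - f1 (x \<otimes> a) y + f1 x (a \<otimes> y) - f1 x a)"
        using ya sy by (simp add: algebra_simps)
      then show ?thesis using 1 2 by simp
    qed
    have xay: "x \<otimes> a \<otimes> y = x \<otimes> y \<otimes> a" using ya that ac by (simp add: m_assoc)
    have e': "f1 (x \<otimes> a) y = f1 x y + f1 (x \<otimes> y) a - f1 x a" using e by (simp add: algebra_simps)
    show ?thesis unfolding F_def xay e' K1[OF that(1,3)] K1[OF m_closed[OF that(1,2)] that(3)]
      by (simp add: algebra_simps)
  qed
  have K3: "F x (y \<otimes> a) = F x y" if "x \<in> carrier G" "y \<in> carrier G" "a \<in> N" for x y a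
  proof -
    have ac: "a \<in> carrier G" using that Nsub by blast
    have 1: "f1 y a - f1 (x \<otimes> y) a + f1 x (y \<otimes> a) - f1 x y = 0" using f1c[OF that(1,2) ac] .
    have e': "f1 x (y \<otimes> a) = f1 x y + f1 (x \<otimes> y) a - f1 y a" using 1 by (simp add: algebra_simps)
    have xya: "x \<otimes> (y \<otimes> a) = x \<otimes> y \<otimes> a" using that ac by (simp add: m_assoc)
    show ?thesis unfolding F_def xya e' K1[OF that(2,3)] K1[OF m_closed[OF that(1,2)] that(3)]
      by (simp add: algebra_simps)
  qed
  have K4: "F x y = F (s (N #> x)) (s (N #> y))" if "x \<in> carrier G" "y \<in> carrier G" for x y
  proof -
    have "F x y = F (s (N #> x) \<otimes> rr x) (s (N #> y) \<otimes> rr y)" using decomp that by simp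
    also have "\<dots> = F (s (N #> x)) (s (N #> y) \<otimes> rr y)"
      using K2 sc rrN that m_closed rrc by simp
    also have "\<dots> = F (s (N #> x)) (s (N #> y))"
      using K3 sc rrN that by simp
    finally show ?thesis .
  qed
  define g where "g = (\<lambda>U V. F (s U) (s V))"
  have m: "\<And>U V. monoid.mult (G Mod N) U V = U <#> V" by (simp add: FactGroup_def)
  have gc: "cocycle2 (G Mod N) g"
    unfolding cocycle2_def m
  proof (intro ballI)
    fix U V W assume U: "U \<in> carrier (G Mod N)" and V: "V \<in> carrier (G Mod N)"
      and W: "W \<in> carrier (G Mod N)"
    obtain u where u: "u \<in> carrier G" "U = N #> u" using U by (auto simp: FactGroup_def RCOSETS_def)
    obtain v where v: "v \<in> carrier G" "V = N #> v" using V by (auto simp: FactGroup_def RCOSETS_def)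
    obtain w where w: "w \<in> carrier G" "W = N #> w" using W by (auto simp: FactGroup_def RCOSETS_def)
    have gi: "g (N #> p) (N #> q) = F p q" if "p \<in> carrier G" "q \<in> carrier G" for p q
      unfolding g_def using K4[OF that] by simp
    show "g V W - g (U <#> V) W + g U (V <#> W) - g U V = 0"
      unfolding u(2) v(2) w(2) N.rcos_sum[OF u(1) v(1)] N.rcos_sum[OF v(1) w(1)]
      using gi u(1) v(1) w(1) Fc[OF u(1) v(1) w(1)] by simp
  qed
  have coh: "cohomologous2 G f (\<lambda>x y. g (N #> x) (N #> y))"
    unfolding cohomologous2_def coboundary2_def
  proof (intro exI[of _ "\<lambda>x. c1 x + c x"] ballI)
    fix x y assume x: "x \<in> carrier G" and y: "y \<in> carrier G"
    have "g (N #> x) (N #> y) = F x y" unfolding g_def using K4[OF x y] by simp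
    then show "f x y - g (N #> x) (N #> y) = (c1 y + c y) - (c1 (x \<otimes> y) + c (x \<otimes> y)) + (c1 x + c x)"
      unfolding F_def f1_def by (simp add: algebra_simps)
  qed
  show ?thesis unfolding in_image_inflation_def using gc coh by blast
qed
end

theorem proposition3p9:
  fixes G :: "('a, 'm) monoid_scheme" and H K :: "'a set"
    and f :: "'a set \<Rightarrow> 'a set \<Rightarrow> 'd::ab_group_add"
  assumes "group G"
    and "H \<lhd> G" and "K \<lhd> G"
    and "H <#>\<^bsub>G\<^esub> K = carrier G"
    and "\<forall>h\<in>H. \<forall>k\<in>K. h \<otimes>\<^bsub>G\<^esub> k = k \<otimes>\<^bsub>G\<^esub> h"
    and "divisible_ab TYPE('d)"
    and "cocycle2 (G Mod Zc G H K) f"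
    and "res_zero ((G Mod Zc G H K)\<lparr>carrier := qbar G (Zc G H K) H\<rparr>) (qbar G (Zc G H K) (H \<inter> K)) f
         \<or> res_zero ((G Mod Zc G H K)\<lparr>carrier := qbar G (Zc G H K) K\<rparr>) (qbar G (Zc G H K) (H \<inter> K)) f"
  shows "(in_image_inflation (G Mod Zc G H K) (qbar G (Zc G H K) (H \<inter> K)) f
           \<longleftrightarrow> hom_tensor_zero (qbar G (Zc G H K) H) (qbar G (Zc G H K) (H \<inter> K))
                  (fst (mu_star (nu_map f)))
               \<and> hom_tensor_zero (qbar G (Zc G H K) K) (qbar G (Zc G H K) (H \<inter> K))
                  (snd (mu_star (nu_map f))))
       \<and> (hom_tensor_zero (qbar G (Zc G H K) H) (qbar G (Zc G H K) (H \<inter> K))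
                  (fst (mu_star (nu_map f)))
               \<and> hom_tensor_zero (qbar G (Zc G H K) K) (qbar G (Zc G H K) (H \<inter> K))
                  (snd (mu_star (nu_map f)))
           \<longleftrightarrow> hom_tensor_zero (qbar G (Zc G H K) H) (qbar G (Zc G H K) (H \<inter> K)) (psi_map f)
               \<and> hom_tensor_zero (qbar G (Zc G H K) K) (qbar G (Zc G H K) (H \<inter> K)) (psi_map f))"
proof -
  define Z where "Z = Zc G H K"
  interpret G: group G by (rule assms(1))
  have Hs: "subgroup H G" and Ks: "subgroup K G" using assms(2,3) normal_imp_subgroup by auto
  have Hc: "H \<subseteq> carrier G" and Kc: "K \<subseteq> carrier G" using Hs Ks subgroup.subset by auto
  have comm: "\<And>h k. h \<in> H \<Longrightarrow> k \<in> K \<Longrightarrow> h \<otimes>\<^bsub>G\<^esub> k = k \<otimes>\<^bsub>G\<^esub> h" using assms(5) by blast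
  have Acen: "\<forall>a\<in>H \<inter> K. \<forall>x\<in>carrier G. a \<otimes>\<^bsub>G\<^esub> x = x \<otimes>\<^bsub>G\<^esub> a"
  proof (intro ballI)
    fix a x assume a: "a \<in> H \<inter> K" and x: "x \<in> carrier G"
    then obtain h k where hk: "h \<in> H" "k \<in> K" "x = h \<otimes>\<^bsub>G\<^esub> k"
      using assms(4) unfolding set_mult_def by blast
    have ac: "a \<in> carrier G" using a Hc by blast
    have hc: "h \<in> carrier G" "k \<in> carrier G" using hk Hc Kc by auto
    have "a \<otimes>\<^bsub>G\<^esub> x = (a \<otimes>\<^bsub>G\<^esub> h) \<otimes>\<^bsub>G\<^esub> k" using hk ac hc by (simp add: G.m_assoc)
    also have "\<dots> = (h \<otimes>\<^bsub>G\<^esub> a) \<otimes>\<^bsub>G\<^esub> k" using comm[of h a] hk a by simp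
    also have "\<dots> = h \<otimes>\<^bsub>G\<^esub> (k \<otimes>\<^bsub>G\<^esub> a)" using comm[of a k] hk a ac hc by (simp add: G.m_assoc)
    also have "\<dots> = x \<otimes>\<^bsub>G\<^esub> a" using hk ac hc by (simp add: G.m_assoc)
    finally show "a \<otimes>\<^bsub>G\<^esub> x = x \<otimes>\<^bsub>G\<^esub> a" .
  qed
  have As: "subgroup (H \<inter> K) G" using G.subgroups_Inter_pair Hs Ks by blast
  have ZA: "Z \<subseteq> H \<inter> K" unfolding Z_def Zc_def
    using G.derived_incl[OF subset_refl Hs] G.derived_incl[OF subset_refl Ks] by blast
  have Zs: "subgroup Z G" unfolding Z_def Zc_def
    using G.subgroups_Inter_pair G.derived_is_subgroup Hc Kc by blast
  have Zn: "Z \<lhd> G" using G.central_normal[OF Zs] Acen ZA by blast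
  interpret Z: normal Z G by (rule Zn)
  define Q where "Q = G Mod Z"
  have Qg: "group Q" unfolding Q_def by (rule Z.factorgroup_is_group)
  have hom: "(\<lambda>a. Z #>\<^bsub>G\<^esub> a) \<in> hom G Q" unfolding Q_def by (rule Z.r_coset_hom_Mod)
  have gh: "group_hom G Q (\<lambda>a. Z #>\<^bsub>G\<^esub> a)"
    using hom Qg assms(1) unfolding group_hom_def group_hom_axioms_def by blast
  have qb: "\<And>T. qbar G Z T = (\<lambda>a. Z #>\<^bsub>G\<^esub> a) ` T" unfolding qbar_def by simp
  have Abs: "subgroup (qbar G Z (H \<inter> K)) Q"
    unfolding qb using group_hom.subgroup_img_is_subgroup[OF gh As] .
  have mQ: "\<And>x y. x \<in> carrier G \<Longrightarrow> y \<in> carrier G \<Longrightarrow>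
     (Z #>\<^bsub>G\<^esub> x) \<otimes>\<^bsub>Q\<^esub> (Z #>\<^bsub>G\<^esub> y) = Z #>\<^bsub>G\<^esub> (x \<otimes>\<^bsub>G\<^esub> y)"
    unfolding Q_def using Z.rcos_sum by (simp add: FactGroup_def)
  have carQ: "\<And>U. U \<in> carrier Q \<longleftrightarrow> (\<exists>x\<in>carrier G. U = Z #>\<^bsub>G\<^esub> x)"
    unfolding Q_def by (auto simp: FactGroup_def RCOSETS_def)
  have Abcen: "\<forall>a\<in>qbar G Z (H \<inter> K). \<forall>x\<in>carrier Q. a \<otimes>\<^bsub>Q\<^esub> x = x \<otimes>\<^bsub>Q\<^esub> a"
  proof (intro ballI)
    fix a x assume a: "a \<in> qbar G Z (H \<inter> K)" and x: "x \<in> carrier Q"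
    obtain a0 where a0: "a0 \<in> H \<inter> K" "a = Z #>\<^bsub>G\<^esub> a0" using a unfolding qb by blast
    obtain x0 where x0: "x0 \<in> carrier G" "x = Z #>\<^bsub>G\<^esub> x0" using x carQ by blast
    have a0c: "a0 \<in> carrier G" using a0 Hc by blast
    show "a \<otimes>\<^bsub>Q\<^esub> x = x \<otimes>\<^bsub>Q\<^esub> a" unfolding a0(2) x0(2) mQ[OF a0c x0(1)] mQ[OF x0(1) a0c]
      using Acen a0(1) x0(1) by metis
  qed
  have fc: "cocycle2 Q f" using assms(7) unfolding Q_def Z_def .
  have rz: "coboundary2 (Q\<lparr>carrier := qbar G Z (H \<inter> K)\<rparr>) f"
    using assms(8) unfolding res_zero_def Q_def Z_def by auto
  have HQ: "qbar G Z H \<subseteq> carrier Q" and KQ: "qbar G Z K \<subseteq> carrier Q"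
    using carQ Hc Kc unfolding qb by auto
  have AQ: "qbar G Z (H \<inter> K) \<subseteq> carrier Q" using subgroup.subset[OF Abs] .
  let ?S = "\<lambda>T. \<forall>x\<in>T. \<forall>a\<in>qbar G Z (H \<inter> K). f x a = f a x"
  have i_S: "in_image_inflation Q (qbar G Z (H \<inter> K)) f \<longleftrightarrow> ?S (qbar G Z H) \<and> ?S (qbar G Z K)"
  proof
    assume inf: "in_image_inflation Q (qbar G Z (H \<inter> K)) f"
    have Nn: "qbar G Z (H \<inter> K) \<lhd> Q" using group.central_normal[OF Qg Abs Abcen] .
    have "?S (carrier Q)"
      using group.infl_sym[OF Qg Nn fc inf] Abcen by metis
    then show "?S (qbar G Z H) \<and> ?S (qbar G Z K)" using HQ KQ by blast
  next
    assume S: "?S (qbar G Z H) \<and> ?S (qbar G Z K)"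
    have "?S (carrier Q)"
    proof (intro ballI)
      fix x a assume x: "x \<in> carrier Q" and a: "a \<in> qbar G Z (H \<inter> K)"
      obtain x0 where x0: "x0 \<in> carrier G" "x = Z #>\<^bsub>G\<^esub> x0" using x carQ by blast
      then obtain h k where hk: "h \<in> H" "k \<in> K" "x0 = h \<otimes>\<^bsub>G\<^esub> k"
        using assms(4) unfolding set_mult_def by blast
      have hc: "h \<in> carrier G" "k \<in> carrier G" using hk Hc Kc by auto
      have xe: "x = (Z #>\<^bsub>G\<^esub> h) \<otimes>\<^bsub>Q\<^esub> (Z #>\<^bsub>G\<^esub> k)" using mQ[OF hc] x0 hk by simp
      have hq: "Z #>\<^bsub>G\<^esub> h \<in> qbar G Z H" and kq: "Z #>\<^bsub>G\<^esub> k \<in> qbar G Z K" unfolding qb using hk by auto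
      have ac: "a \<in> carrier Q" using a AQ by blast
      have ce: "\<forall>y\<in>carrier Q. a \<otimes>\<^bsub>Q\<^esub> y = y \<otimes>\<^bsub>Q\<^esub> a" using Abcen a by blast
      have "f x a - f a x = (f (Z #>\<^bsub>G\<^esub> h) a - f a (Z #>\<^bsub>G\<^esub> h)) + (f (Z #>\<^bsub>G\<^esub> k) a - f a (Z #>\<^bsub>G\<^esub> k))"
        unfolding xe using group.cocycle_psi_hom[OF Qg fc ac ce] hq kq HQ KQ by blast
      also have "\<dots> = 0" using S hq kq a by simp
      finally show "f x a = f a x" by simp
    qed
    then show "in_image_inflation Q (qbar G Z (H \<inter> K)) f"
      using group.infl_of_sym[OF Qg Abs Abcen fc rz] by blast
  qed
  show ?thesis
    unfolding Z_def[symmetric] Q_def[symmetric] i_S hom_tensor_zero_def mu_star_def nu_map_def psi_map_def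
    by (auto simp: algebra_simps)
qed

end
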